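(* Let $p$ be a prime and $q\in\mathbb{N}$, and let $n=pq$ or $n=pq+1$. Then the fixed point space $C_n(\mathbb{C})^{\mathbb{Z}/p}$ is homeomorphic to $C_q(\mathbb{C}^* )$.
   Context: $C_n(Y)$ denotes the unordered configuration space of $n$ distinct points in $Y$. The group $\mathbb{Z}/p$, generated by $\zeta=e^{2\pi i/p}$, acts on $C_n(\mathbb{C})$ by rotation: $\{z_1,\dots,z_n\}\mapsto\{\zeta z_1,\dots,\zeta z_n\}$. *)

theory Defs
  imports "HOL-Analysis.Analysis" "HOL-Computational_Algebra.Primes"
begin

definition quotient_topology_of :: "'a topology \<Rightarrow> ('a \<Rightarrow> 'b) \<Rightarrow> 'b topology" where
  "quotient_topology_of X f =
     topology (\<lambda>U. U \<subseteq> f ` topspace X \<and> openin X {x \<in> topspace X. f x \<in> U})"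

definition ord_conf :: "nat \<Rightarrow> 'a::topological_space set \<Rightarrow> (nat \<Rightarrow> 'a) topology" where
  "ord_conf n Y = subtopology (product_topology (\<lambda>i. subtopology euclidean Y) {..<n})
                     {f. inj_on f {..<n}}"

definition unord_conf :: "nat \<Rightarrow> 'a::topological_space set \<Rightarrow> 'a set topology" where
  "unord_conf n Y = quotient_topology_of (ord_conf n Y) (\<lambda>f. f ` {..<n})"

end

theory Submission
  imports Defs
begin


lemma qt_istop: "istopology (\<lambda>U. U \<subseteq> f ` topspace X \<and> openin X {x \<in> topspace X. f x \<in> U})"
proof -
  have 1: "S \<inter> T \<subseteq> f ` topspace X \<and> openin X {x \<in> topspace X. f x \<in> S \<inter> T}"
    if S: "S \<subseteq> f ` topspace X \<and> openin X {x \<in> topspace X. f x \<in> S}"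
     and T: "T \<subseteq> f ` topspace X \<and> openin X {x \<in> topspace X. f x \<in> T}" for S T
  proof -
    have "{x \<in> topspace X. f x \<in> S \<inter> T} = {x \<in> topspace X. f x \<in> S} \<inter> {x \<in> topspace X. f x \<in> T}" by auto
    then show ?thesis using S T by auto
  qed
  have 2: "\<Union>K \<subseteq> f ` topspace X \<and> openin X {x \<in> topspace X. f x \<in> \<Union>K}"
    if K: "\<forall>S\<in>K. S \<subseteq> f ` topspace X \<and> openin X {x \<in> topspace X. f x \<in> S}" for K
  proof -
    have "{x \<in> topspace X. f x \<in> \<Union>K} = \<Union>((\<lambda>S. {x \<in> topspace X. f x \<in> S}) ` K)" by auto
    then show ?thesis using K by auto
  qed
  show ?thesis unfolding istopology_def using 1 2 by blast
qed

lemma qt_open: "openin (quotient_topology_of X f) U \<longleftrightarrow> U \<subseteq> f ` topspace X \<and> openin X {x \<in> topspace X. f x \<in> U}"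
  unfolding quotient_topology_of_def by (simp only: topology_inverse'[OF qt_istop])

lemma qt_topspace: "topspace (quotient_topology_of X f) = f ` topspace X"
proof -
  have "openin (quotient_topology_of X f) (f ` topspace X)"
  proof -
    have "{x \<in> topspace X. f x \<in> f ` topspace X} = topspace X" by blast
    then show ?thesis unfolding qt_open by simp
  qed
  then have "f ` topspace X \<subseteq> topspace (quotient_topology_of X f)"
    by (simp add: openin_subset)
  moreover have "topspace (quotient_topology_of X f) \<subseteq> f ` topspace X"
    using qt_open by (metis openin_topspace)
  ultimately show ?thesis by blast
qed

lemma qt_quotient: "quotient_map X (quotient_topology_of X f) f"
  unfolding quotient_map_def qt_topspace qt_open by auto

lemma cont_into_qt:
  assumes "\<And>z. z \<in> topspace Z \<Longrightarrow> \<exists>W h. openin Z W \<and> z \<in> W \<and> continuous_map (subtopology Z W) X h \<and> (\<forall>w\<in>W. f (h w) = g w)"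
  shows "continuous_map Z (quotient_topology_of X f) g"
  unfolding continuous_map_def
proof (intro conjI allI impI)
  show "g \<in> topspace Z \<rightarrow> topspace (quotient_topology_of X f)"
  proof
    fix z assume z: "z \<in> topspace Z"
    then obtain W h where W: "openin Z W" "z \<in> W" "continuous_map (subtopology Z W) X h" "\<forall>w\<in>W. f (h w) = g w"
      using assms by blast
    have "z \<in> topspace (subtopology Z W)" using W(2) z by simp
    then have "h z \<in> topspace X" using continuous_map_funspace[OF W(3)] by (rule funcset_mem[rotated])
    moreover have "g z = f (h z)" using W(2,4) by simp
    ultimately show "g z \<in> topspace (quotient_topology_of X f)"
      unfolding qt_topspace by (simp add: rev_image_eqI)
  qed
next
  fix U assume U: "openin (quotient_topology_of X f) U"
  then have U1: "openin X {x \<in> topspace X. f x \<in> U}" by (simp add: qt_open)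
  show "openin Z {x \<in> topspace Z. g x \<in> U}"
  proof (rule openin_subopen[THEN iffD2], rule ballI)
    fix z assume z: "z \<in> {x \<in> topspace Z. g x \<in> U}"
    then obtain W h where W: "openin Z W" "z \<in> W" "continuous_map (subtopology Z W) X h" "\<forall>w\<in>W. f (h w) = g w"
      using assms by blast
    define T where "T = {w \<in> topspace (subtopology Z W). h w \<in> {x \<in> topspace X. f x \<in> U}}"
    have "openin (subtopology Z W) T"
      unfolding T_def using W(3) U1 by (rule openin_continuous_map_preimage)
    then have "openin Z T" using W(1) openin_trans_full by blast
    moreover have "z \<in> T"
    proof -
      have "z \<in> topspace (subtopology Z W)" using W(2) z by simp
      moreover then have "h z \<in> topspace X" using continuous_map_funspace[OF W(3)] by (rule funcset_mem[rotated])
      moreover have "f (h z) \<in> U" using W(2,4) z by simp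
      ultimately show ?thesis unfolding T_def by simp
    qed
    moreover have "T \<subseteq> {x \<in> topspace Z. g x \<in> U}"
      unfolding T_def using W(4) by force
    ultimately show "\<exists>T. openin Z T \<and> z \<in> T \<and> T \<subseteq> {x \<in> topspace Z. g x \<in> U}" by blast
  qed
qed

lemma cont_from_sub_qt:
  assumes "closedin (quotient_topology_of X f) V"
    and "continuous_map (subtopology X {x \<in> topspace X. f x \<in> V}) Y (g \<circ> f)"
  shows "continuous_map (subtopology (quotient_topology_of X f) V) Y g"
proof -
  have "quotient_map (subtopology X {x \<in> topspace X. f x \<in> V}) (subtopology (quotient_topology_of X f) V) f"
    using quotient_map_restriction[OF qt_quotient] assms(1) by blast
  then show ?thesis using assms(2) continuous_compose_quotient_map_eq by blast
qed

lemma openin_all: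
  assumes "finite I" "\<And>i. i \<in> I \<Longrightarrow> openin X {x \<in> topspace X. P i x}"
  shows "openin X {x \<in> topspace X. \<forall>i\<in>I. P i x}"
proof -
  have "{x \<in> topspace X. \<forall>i\<in>I. P i x} = (\<Inter>i\<in>I. {x \<in> topspace X. P i x}) \<inter> topspace X" by auto
  then show ?thesis using openin_INT[OF assms] by simp
qed

lemma openin_ex:
  assumes "\<And>i. i \<in> I \<Longrightarrow> openin X {x \<in> topspace X. P i x}"
  shows "openin X {x \<in> topspace X. \<exists>i\<in>I. P i x}"
proof -
  have "{x \<in> topspace X. \<exists>i\<in>I. P i x} = \<Union>((\<lambda>i. {x \<in> topspace X. P i x}) ` I)" by auto
  then show ?thesis using assms by auto
qed

lemma openin_neq:
  fixes f g :: "'a \<Rightarrow> 'b::metric_space"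
  assumes "continuous_map X euclidean f" "continuous_map X euclidean g"
  shows "openin X {x \<in> topspace X. f x \<noteq> g x}"
proof -
  have "closedin X {x \<in> topspace X. f x = g x}"
    using closedin_continuous_maps_eq[OF Hausdorff_space_euclidean assms] .
  then have "openin X (topspace X - {x \<in> topspace X. f x = g x})" by auto
  moreover have "topspace X - {x \<in> topspace X. f x = g x} = {x \<in> topspace X. f x \<noteq> g x}" by auto
  ultimately show ?thesis by simp
qed

lemma topspace_ord_conf: "topspace (ord_conf n Y) = {f. f \<in> PiE {..<n} (\<lambda>_. Y) \<and> inj_on f {..<n}}"
  unfolding ord_conf_def by auto

lemma proj_cont: "k < n \<Longrightarrow> continuous_map (ord_conf n Y) euclidean (\<lambda>f. f k)"
  unfolding ord_conf_def
  apply (rule continuous_map_from_subtopology)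
  using continuous_map_product_projection[of k "{..<n}" "\<lambda>i. subtopology euclidean Y"]
  by (simp add: continuous_map_in_subtopology)

lemma coord_cont:
  assumes "k < n" "\<And>f. f \<in> topspace (ord_conf n Y) \<inter> W \<Longrightarrow> f k \<in> Oset" "continuous_on Oset \<phi>"
  shows "continuous_map (subtopology (ord_conf n Y) W) euclidean (\<lambda>f. \<phi> (f k))"
proof -
  have "continuous_map (subtopology (ord_conf n Y) W) (top_of_set Oset) (\<lambda>f. f k)"
    unfolding continuous_map_in_subtopology
    using continuous_map_from_subtopology[OF proj_cont[OF assms(1)]] assms(2) by auto
  moreover have "continuous_map (top_of_set Oset) euclidean \<phi>" using assms(3) by simp
  ultimately show ?thesis using continuous_map_compose[unfolded o_def] by blast
qed

lemma topspace_unord_conf: "topspace (unord_conf n Y) = (\<lambda>f. f ` {..<n}) ` topspace (ord_conf n Y)"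
  unfolding unord_conf_def qt_topspace ..

lemma topspace_unord_conf_alt: "topspace (unord_conf n Y) = {S. S \<subseteq> Y \<and> finite S \<and> card S = n}"
proof -
  have "(\<lambda>f. f ` {..<n}) ` {f. f \<in> PiE {..<n} (\<lambda>_. Y) \<and> inj_on f {..<n}} = {S. S \<subseteq> Y \<and> finite S \<and> card S = n}"
  proof (intro equalityI subsetI)
    fix S assume "S \<in> (\<lambda>f. f ` {..<n}) ` {f. f \<in> PiE {..<n} (\<lambda>_. Y) \<and> inj_on f {..<n}}"
    then obtain f where f: "f \<in> PiE {..<n} (\<lambda>_. Y)" "inj_on f {..<n}" "S = f ` {..<n}" by auto
    then show "S \<in> {S. S \<subseteq> Y \<and> finite S \<and> card S = n}"
      by (auto simp: card_image)
  next
    fix S assume S: "S \<in> {S. S \<subseteq> Y \<and> finite S \<and> card S = n}"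
    then obtain h where h: "bij_betw h {0..<n} S" using ex_bij_betw_nat_finite by blast
    define f where "f = restrict h {..<n}"
    have "f \<in> PiE {..<n} (\<lambda>_. Y)" using h S unfolding f_def bij_betw_def by auto
    moreover have "inj_on f {..<n}" using h unfolding f_def bij_betw_def inj_on_def by auto
    moreover have "S = f ` {..<n}" using h unfolding f_def bij_betw_def by auto
    ultimately show "S \<in> (\<lambda>f. f ` {..<n}) ` {f. f \<in> PiE {..<n} (\<lambda>_. Y) \<and> inj_on f {..<n}}" by auto
  qed
  then show ?thesis unfolding topspace_unord_conf topspace_ord_conf .
qed



definition zeta :: "nat \<Rightarrow> complex" where "zeta p = exp (2 * of_real pi * \<i> / of_nat p)"

lemma zeta_pow: "zeta p ^ j = exp(2 * of_real pi * \<i> * of_nat j / of_nat p)"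
proof -
  have "zeta p ^ j = exp (of_nat j * (2 * of_real pi * \<i> / of_nat p))"
    unfolding zeta_def by (rule exp_of_nat_mult[symmetric])
  also have "of_nat j * (2 * of_real pi * \<i> / of_nat p) = 2 * of_real pi * \<i> * of_nat j / of_nat p"
    by simp
  finally show ?thesis .
qed

lemma zeta_p: "p \<noteq> 0 \<Longrightarrow> zeta p ^ p = 1"
  using complex_root_unity[of p 1] zeta_pow[of p 1] by simp

lemma zeta_nz: "zeta p \<noteq> 0"
  unfolding zeta_def by simp

lemma zeta_inj: "1 \<le> p \<Longrightarrow> i < p \<Longrightarrow> j < p \<Longrightarrow> zeta p ^ i = zeta p ^ j \<Longrightarrow> i = j"
  unfolding zeta_pow using complex_root_unity_eq[of p i j] by simp

lemma root_rel:
  assumes "1 \<le> p" "w \<noteq> 0" "z ^ p = w ^ p"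
  shows "\<exists>j<p. z = zeta p ^ j * w"
proof -
  have "(z / w) ^ p = 1" using assms by (simp add: power_divide)
  then have "z / w \<in> {z::complex. z^p = 1}" by simp
  then obtain j where "j < p" "z / w = exp(2 * of_real pi * \<i> * of_nat j / of_nat p)"
    using complex_roots_unity[OF assms(1)] by auto
  then have "z = zeta p ^ j * w" using assms(2) unfolding zeta_pow by (simp add: field_simps)
  then show ?thesis using \<open>j < p\<close> by blast
qed

lemma inv_pow:
  assumes "(\<lambda>z. zeta p * z) ` S = S" "z \<in> S"
  shows "zeta p ^ j * z \<in> S"
proof (induction j)
  case 0
  then show ?case using assms by simp
next
  case (Suc j)
  then have "zeta p * (zeta p ^ j * z) \<in> (\<lambda>z. zeta p * z) ` S" by blast
  then show ?case using assms(1) by (simp add: mult.assoc)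
qed

lemma fiber:
  assumes "1 \<le> p" "(\<lambda>z. zeta p * z) ` S = S" "w \<in> S" "w \<noteq> 0"
  shows "{z \<in> S - {0}. z^p = w^p} = (\<lambda>j. zeta p ^ j * w) ` {..<p}"
    and "card {z \<in> S - {0}. z^p = w^p} = p"
proof -
  show eq: "{z \<in> S - {0}. z^p = w^p} = (\<lambda>j. zeta p ^ j * w) ` {..<p}"
  proof (intro equalityI subsetI)
    fix z assume "z \<in> {z \<in> S - {0}. z^p = w^p}"
    then obtain j where "j < p" "z = zeta p ^ j * w" using root_rel[OF assms(1,4)] by auto
    then show "z \<in> (\<lambda>j. zeta p ^ j * w) ` {..<p}" by auto
  next
    fix z assume "z \<in> (\<lambda>j. zeta p ^ j * w) ` {..<p}"
    then obtain j where j: "j < p" "z = zeta p ^ j * w" by auto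
    have "z \<in> S" using inv_pow[OF assms(2,3)] j by simp
    moreover have "z \<noteq> 0" using j assms(4) zeta_nz by simp
    moreover have "z ^ p = w ^ p"
    proof -
      have zp: "zeta p ^ p = 1" using assms(1) by (intro zeta_p) simp
      have "(zeta p ^ j) ^ p = (zeta p ^ p) ^ j" by (metis power_mult mult.commute)
      then have "z ^ p = (zeta p ^ p) ^ j * w ^ p" using j by (simp only: power_mult_distrib)
      then show ?thesis using zp by simp
    qed
    ultimately show "z \<in> {z \<in> S - {0}. z^p = w^p}" by simp
  qed
  have "inj_on (\<lambda>j. zeta p ^ j * w) {..<p}"
    using zeta_inj[OF assms(1)] assms(4) by (auto simp: inj_on_def)
  then show "card {z \<in> S - {0}. z^p = w^p} = p"
    unfolding eq by (simp add: card_image)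
qed

lemma count:
  assumes "1 \<le> p" "finite S" "(\<lambda>z. zeta p * z) ` S = S"
  shows "card (S - {0}) = p * card ((\<lambda>z. z^p) ` (S - {0}))"
proof -
  define A where "A = S - {0}"
  define I where "I = (\<lambda>z. z^p) ` A"
  have fA: "finite A" unfolding A_def using assms(2) by simp
  have fI: "finite I" unfolding I_def using fA by simp
  have cov: "A = (\<Union>v\<in>I. {z \<in> A. z^p = v})" unfolding I_def by blast
  have "card (\<Union>v\<in>I. {z \<in> A. z^p = v}) = (\<Sum>v\<in>I. card {z \<in> A. z^p = v})"
    by (rule card_UN_disjoint) (use fI fA in auto)
  also have "\<dots> = (\<Sum>v\<in>I. p)"
  proof (rule sum.cong)
    fix v assume "v \<in> I"
    then obtain w where w: "w \<in> S" "w \<noteq> 0" "v = w^p" unfolding I_def A_def by blast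
    have "card {z \<in> S - {0}. z^p = w^p} = p" using fiber(2)[OF assms(1,3) w(1,2)] .
    then show "card {z \<in> A. z^p = v} = p" unfolding A_def w(3) .
  qed (rule refl)
  also have "\<dots> = p * card I" by simp
  finally show ?thesis using cov unfolding A_def I_def by simp
qed

lemma count_q:
  assumes "prime p" "n = p * q \<or> n = p * q + 1" "finite S" "card S = n" "(\<lambda>z. zeta p * z) ` S = S"
  shows "card ((\<lambda>z. z^p) ` (S - {0})) = q" "0 \<in> S \<longleftrightarrow> n = p * q + 1"
proof -
  have p2: "2 \<le> p" using assms(1) prime_ge_2_nat by blast
  define m where "m = card ((\<lambda>z. z^p) ` (S - {0}))"
  have c: "card (S - {0}) = p * m" unfolding m_def using count assms p2 by simp
  have "m = q \<and> (0 \<in> S \<longleftrightarrow> n = p * q + 1)"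
  proof (cases "0 \<in> S")
    case True
    then have "card (S - {0}) = n - 1" using assms by simp
    moreover have "n \<ge> 1" using True assms(3,4) card_0_eq by fastforce
    ultimately have e: "p * m + 1 = n" using c by simp
    show ?thesis
    proof (cases "n = p * q")
      case True
      then have "p dvd 1" using e by (metis dvd_add_right_iff dvd_triv_left)
      then show ?thesis using p2 by simp
    next
      case False
      then have "n = p * q + 1" using assms(2) by simp
      then have "m = q" using e p2 by simp
      then show ?thesis using \<open>0 \<in> S\<close> False assms(2) by simp
    qed
  next
    case False
    then have e: "p * m = n" using c assms(4) by simp
    show ?thesis
    proof (cases "n = p * q")
      case True
      then have "m = q" using e p2 by simp
      then show ?thesis using False True by simp
    next
      case False
      then have "n = p * q + 1" using assms(2) by simp
      then have "p dvd 1" using e by (metis dvd_add_right_iff dvd_triv_left)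
      then show ?thesis using p2 by simp
    qed
  qed
  then show "card ((\<lambda>z. z^p) ` (S - {0})) = q" "0 \<in> S \<longleftrightarrow> n = p * q + 1"
    unfolding m_def by auto
qed

definition Fm :: "nat \<Rightarrow> complex set \<Rightarrow> complex set" where
  "Fm p S = (\<lambda>z. z^p) ` (S - {0})"

definition Gm :: "nat \<Rightarrow> nat \<Rightarrow> nat \<Rightarrow> complex set \<Rightarrow> complex set" where
  "Gm p q n T = {z. z^p \<in> T} \<union> (if n = p * q + 1 then {0} else {})"

lemma root_exists: "1 \<le> p \<Longrightarrow> w \<noteq> 0 \<Longrightarrow> exp (Ln w / of_nat p) ^ p = w"
proof -
  assume "1 \<le> p" "w \<noteq> 0"
  then have "exp (Ln w / of_nat p) ^ p = exp (of_nat p * (Ln w / of_nat p))"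
    by (simp only: exp_of_nat_mult)
  also have "\<dots> = exp (Ln w)" using \<open>1 \<le> p\<close> by simp
  finally show ?thesis using \<open>w \<noteq> 0\<close> by simp
qed

lemma GF:
  assumes "prime p" "n = p * q \<or> n = p * q + 1" "finite S" "card S = n" "(\<lambda>z. zeta p * z) ` S = S"
  shows "Gm p q n (Fm p S) = S"
proof -
  have p1: "1 \<le> p" using assms(1) prime_ge_1_nat by blast
  have "{z. z^p \<in> (\<lambda>z. z^p) ` (S - {0})} = S - {0}"
  proof (intro equalityI subsetI)
    fix z assume "z \<in> {z. z^p \<in> (\<lambda>z. z^p) ` (S - {0})}"
    then obtain w where w: "w \<in> S" "w \<noteq> 0" "z^p = w^p" by auto
    then obtain j where "z = zeta p ^ j * w" using root_rel[OF p1] by blast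
    then show "z \<in> S - {0}" using inv_pow[OF assms(5) w(1)] w(2) zeta_nz by simp
  qed auto
  then show ?thesis unfolding Gm_def Fm_def using count_q(2)[OF assms] by auto
qed

lemma FG:
  assumes "1 \<le> p" "0 \<notin> T"
  shows "Fm p (Gm p q n T) = T"
proof -
  have "Gm p q n T - {0} = {z. z^p \<in> T}"
    unfolding Gm_def using assms by (auto simp: power_0_left)
  moreover have "(\<lambda>z. z^p) ` {z. z^p \<in> T} = T"
  proof (intro equalityI subsetI)
    fix w assume "w \<in> T"
    then have "w \<noteq> 0" using assms by auto
    then have "exp (Ln w / of_nat p) ^ p = w" using root_exists assms by simp
    then show "w \<in> (\<lambda>z. z^p) ` {z. z^p \<in> T}" using \<open>w \<in> T\<close>
      by (metis (mono_tags, lifting) image_eqI mem_Collect_eq)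
  qed auto
  ultimately show ?thesis unfolding Fm_def by simp
qed

lemma G_inv:
  assumes "1 \<le> p"
  shows "(\<lambda>z. zeta p * z) ` (Gm p q n T) = Gm p q n T"
proof -
  have pw: "(zeta p * z) ^ p = z ^ p" for z
    using zeta_p[of p] assms by (simp add: power_mult_distrib)
  show ?thesis
  proof (intro equalityI subsetI)
    fix x assume "x \<in> (\<lambda>z. zeta p * z) ` (Gm p q n T)"
    then obtain z where "z \<in> Gm p q n T" "x = zeta p * z" by auto
    then show "x \<in> Gm p q n T" unfolding Gm_def using pw by auto
  next
    fix x assume x: "x \<in> Gm p q n T"
    define y where "y = zeta p ^ (p - 1) * x"
    have "zeta p * y = zeta p ^ p * x" unfolding y_def using assms
      by (metis (no_types, lifting) mult.assoc One_nat_def Suc_diff_le diff_Suc_Suc minus_nat.diff_0 power_Suc)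
    then have xy: "x = zeta p * y" using zeta_p assms by simp
    have "y \<in> Gm p q n T"
    proof -
      have "y ^ p = x ^ p"
      proof -
        have zp: "zeta p ^ p = 1" using assms(1) by (intro zeta_p) simp
        have "(zeta p ^ (p - 1)) ^ p = (zeta p ^ p) ^ (p - 1)" by (metis power_mult mult.commute)
        then have "y ^ p = (zeta p ^ p) ^ (p - 1) * x ^ p" unfolding y_def by (simp only: power_mult_distrib)
        then show ?thesis using zp by simp
      qed
      moreover have "x = 0 \<Longrightarrow> y = 0" unfolding y_def by simp
      ultimately show ?thesis using x unfolding Gm_def by auto
    qed
    then show "x \<in> (\<lambda>z. zeta p * z) ` (Gm p q n T)" using xy by blast
  qed
qed



lemma coord_cont0:
  assumes "k < n" "continuous_on UNIV \<phi>"
  shows "continuous_map (ord_conf n Y) euclidean (\<lambda>f. \<phi> (f k))"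
proof -
  have "continuous_map euclidean euclidean \<phi>" using assms(2) by simp
  then show ?thesis using continuous_map_compose[OF proj_cont[OF assms(1)], unfolded o_def] by blast
qed

lemma inv_iff:
  fixes f :: "nat \<Rightarrow> complex"
  assumes "inj_on f {..<n}" "c \<noteq> 0"
  shows "(\<lambda>z. c * z) ` (f ` {..<n}) = f ` {..<n} \<longleftrightarrow> (\<forall>i\<in>{..<n}. \<exists>j\<in>{..<n}. c * f i = f j)"
proof
  assume "(\<lambda>z. c * z) ` (f ` {..<n}) = f ` {..<n}"
  then show "\<forall>i\<in>{..<n}. \<exists>j\<in>{..<n}. c * f i = f j" by blast
next
  assume a: "\<forall>i\<in>{..<n}. \<exists>j\<in>{..<n}. c * f i = f j"
  have sub: "(\<lambda>z. c * z) ` (f ` {..<n}) \<subseteq> f ` {..<n}" using a by blast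
  have "inj_on (\<lambda>z. c * z) (f ` {..<n})" using assms(2) by (auto simp: inj_on_def)
  then have "card ((\<lambda>z. c * z) ` (f ` {..<n})) = card (f ` {..<n})"
    by (rule card_image)
  then show "(\<lambda>z. c * z) ` (f ` {..<n}) = f ` {..<n}"
    using card_subset_eq[OF _ sub] by simp
qed

lemma fix_closed:
  fixes c :: complex
  assumes "c \<noteq> 0"
  shows "closedin (unord_conf n UNIV) (topspace (unord_conf n UNIV) \<inter> {S. (\<lambda>z. c * z) ` S = S})"
proof -
  let ?X = "ord_conf n (UNIV :: complex set)"
  let ?Q = "unord_conf n (UNIV :: complex set)"
  let ?V = "topspace ?Q \<inter> {S. (\<lambda>z. c * z) ` S = S}"
  have eq: "{f \<in> topspace ?X. f ` {..<n} \<in> topspace ?Q - ?V}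
      = {f \<in> topspace ?X. \<exists>i\<in>{..<n}. \<forall>j\<in>{..<n}. c * f i \<noteq> f j}"
  proof -
    have "f ` {..<n} \<in> topspace ?Q" if "f \<in> topspace ?X" for f
      using that unfolding topspace_unord_conf by blast
    moreover have "inj_on f {..<n}" if "f \<in> topspace ?X" for f
      using that unfolding topspace_ord_conf by blast
    ultimately show ?thesis using inv_iff[OF _ assms] by blast
  qed
  have "openin ?X {f \<in> topspace ?X. \<exists>i\<in>{..<n}. \<forall>j\<in>{..<n}. c * f i \<noteq> f j}"
  proof (rule openin_ex)
    fix i assume i: "i \<in> {..<n}"
    show "openin ?X {f \<in> topspace ?X. \<forall>j\<in>{..<n}. c * f i \<noteq> f j}"
    proof (rule openin_all)
      fix j assume j: "j \<in> {..<n}"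
      show "openin ?X {f \<in> topspace ?X. c * f i \<noteq> f j}"
        by (rule openin_neq) (use i j in \<open>auto intro!: coord_cont0 continuous_intros\<close>)
    qed simp
  qed
  then have "openin ?Q (topspace ?Q - ?V)"
    unfolding unord_conf_def qt_open using eq unfolding unord_conf_def[symmetric]
    by (simp add: topspace_unord_conf)
  then show ?thesis unfolding closedin_def by blast
qed

lemma F_lift:
  assumes "prime p" "n = p*q \<or> n = p*q+1"
    and f0: "f0 \<in> topspace (ord_conf n (UNIV::complex set))" "(\<lambda>z. zeta p * z) ` (f0 ` {..<n}) = f0 ` {..<n}"
  defines "Pre \<equiv> {f \<in> topspace (ord_conf n (UNIV::complex set)). (\<lambda>z. zeta p * z) ` (f ` {..<n}) = f ` {..<n}}"
  shows "\<exists>W h. openin (ord_conf n UNIV) W \<and> f0 \<in> W \<and>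
     continuous_map (subtopology (ord_conf n UNIV) (Pre \<inter> W)) (ord_conf q (-{0})) h \<and>
     (\<forall>f\<in>Pre \<inter> W. h f ` {..<q} = Fm p (f ` {..<n}))"
proof -
  let ?X = "ord_conf n (UNIV::complex set)"
  have p1: "1 \<le> p" using assms(1) prime_ge_1_nat by blast
  have inj0: "inj_on f0 {..<n}" using f0 unfolding topspace_ord_conf by blast
  have cardq: "card (Fm p (f ` {..<n})) = q" "finite (Fm p (f ` {..<n}))" if "f \<in> Pre" for f
  proof -
    have "inj_on f {..<n}" "(\<lambda>z. zeta p * z) ` (f ` {..<n}) = f ` {..<n}"
      using that unfolding Pre_def topspace_ord_conf by blast+
    then show "card (Fm p (f ` {..<n})) = q" unfolding Fm_def
      using count_q(1)[OF assms(1,2), of "f ` {..<n}"] by (simp add: card_image)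
    show "finite (Fm p (f ` {..<n}))" unfolding Fm_def by simp
  qed
  have f0P: "f0 \<in> Pre" unfolding Pre_def using f0 by blast
  obtain b where b: "bij_betw b {0..<q} (Fm p (f0 ` {..<n}))"
    using ex_bij_betw_nat_finite[OF cardq(2)[OF f0P]] cardq(1)[OF f0P] by metis
  have "\<exists>i. i < n \<and> f0 i \<noteq> 0 \<and> f0 i ^ p = b j" if "j < q" for j
  proof -
    have "b j \<in> Fm p (f0 ` {..<n})" using b that unfolding bij_betw_def by auto
    then show ?thesis unfolding Fm_def by auto
  qed
  then obtain idx where idx: "\<And>j. j < q \<Longrightarrow> idx j < n \<and> f0 (idx j) \<noteq> 0 \<and> f0 (idx j) ^ p = b j"
    by metis
  define W1 where "W1 = {f \<in> topspace ?X. \<forall>j\<in>{..<q}. f (idx j) \<noteq> 0}"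
  define D where "D = {(j, j'). j < q \<and> j' < q \<and> j \<noteq> j'}"
  define W2 where "W2 = {f \<in> topspace ?X. \<forall>jj\<in>D. f (idx (fst jj)) ^ p \<noteq> f (idx (snd jj)) ^ p}"
  have oW1: "openin ?X W1" unfolding W1_def
  proof (rule openin_all)
    fix j assume "j \<in> {..<q}"
    then show "openin ?X {f \<in> topspace ?X. f (idx j) \<noteq> 0}"
      using idx by (intro openin_neq coord_cont0 continuous_intros) auto
  qed simp
  have fD: "finite D" unfolding D_def by (rule finite_subset[of _ "{..<q} \<times> {..<q}"]) auto
  have oW2: "openin ?X W2" unfolding W2_def
  proof (rule openin_all[OF fD])
    fix jj assume "jj \<in> D"
    then show "openin ?X {f \<in> topspace ?X. f (idx (fst jj)) ^ p \<noteq> f (idx (snd jj)) ^ p}"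
      using idx unfolding D_def by (intro openin_neq coord_cont0[where \<phi>="\<lambda>z. z ^ p"] continuous_intros) auto
  qed
  define h where "h = (\<lambda>f::nat\<Rightarrow>complex. restrict (\<lambda>j. f (idx j) ^ p) {..<q})"
  have "f0 \<in> W1 \<inter> W2"
  proof -
    have "f0 (idx j) ^ p \<noteq> f0 (idx j') ^ p" if "j < q" "j' < q" "j \<noteq> j'" for j j'
      using idx[OF that(1)] idx[OF that(2)] b that unfolding bij_betw_def inj_on_def by auto
    then show ?thesis unfolding W1_def W2_def D_def using f0 idx by auto
  qed
  moreover have "openin ?X (W1 \<inter> W2)" using oW1 oW2 by auto
  moreover have "continuous_map (subtopology ?X (Pre \<inter> (W1 \<inter> W2))) (ord_conf q (-{0})) h"
    unfolding ord_conf_def[of q] continuous_map_in_subtopology[of _ "product_topology _ _"]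
  proof (intro conjI)
    show "continuous_map (subtopology ?X (Pre \<inter> (W1 \<inter> W2))) (product_topology (\<lambda>i. subtopology euclidean (- {0})) {..<q}) h"
      unfolding continuous_map_componentwise
    proof (intro conjI ballI)
      show "h ` topspace (subtopology ?X (Pre \<inter> (W1 \<inter> W2))) \<subseteq> extensional {..<q}"
        unfolding h_def by auto
    next
      fix k assume k: "k \<in> {..<q}"
      have e: "(\<lambda>x. h x k) = (\<lambda>x. x (idx k) ^ p)" using k unfolding h_def by auto
      have c1: "continuous_map (subtopology ?X (Pre \<inter> (W1 \<inter> W2))) euclidean (\<lambda>x. x (idx k) ^ p)"
        by (rule coord_cont[where Oset=UNIV]) (use k idx in \<open>auto intro: continuous_intros\<close>)
      have c2: "(\<lambda>x. x (idx k) ^ p) \<in> topspace (subtopology ?X (Pre \<inter> (W1 \<inter> W2))) \<rightarrow> - {0}"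
        using k unfolding W1_def by auto
      show "continuous_map (subtopology ?X (Pre \<inter> (W1 \<inter> W2))) (subtopology euclidean (- {0})) (\<lambda>x. h x k)"
        unfolding e continuous_map_in_subtopology using c1 c2 by blast
    qed
  next
    show "h \<in> topspace (subtopology ?X (Pre \<inter> (W1 \<inter> W2))) \<rightarrow> {f. inj_on f {..<q}}"
    proof
      fix f assume "f \<in> topspace (subtopology ?X (Pre \<inter> (W1 \<inter> W2)))"
      then have "f \<in> W2" by auto
      then have "\<forall>j<q. \<forall>j'<q. j \<noteq> j' \<longrightarrow> f (idx j) ^ p \<noteq> f (idx j') ^ p"
        unfolding W2_def D_def by auto
      then show "h f \<in> {f. inj_on f {..<q}}" unfolding h_def inj_on_def by auto
    qed
  qed
  moreover have "\<forall>f\<in>Pre \<inter> (W1 \<inter> W2). h f ` {..<q} = Fm p (f ` {..<n})"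
  proof
    fix f assume f: "f \<in> Pre \<inter> (W1 \<inter> W2)"
    have sub: "h f ` {..<q} \<subseteq> Fm p (f ` {..<n})"
      using f idx unfolding h_def Fm_def W1_def by auto
    have "inj_on (h f) {..<q}"
    proof -
      have "\<forall>j<q. \<forall>j'<q. j \<noteq> j' \<longrightarrow> f (idx j) ^ p \<noteq> f (idx j') ^ p"
        using f unfolding W2_def D_def by auto
      then show ?thesis unfolding h_def inj_on_def by auto
    qed
    then have "card (h f ` {..<q}) = card (Fm p (f ` {..<n}))"
      using cardq f by (simp add: card_image)
    then show "h f ` {..<q} = Fm p (f ` {..<n})"
      using card_subset_eq[OF cardq(2) sub] f by simp
  qed
  ultimately show ?thesis by blast
qed

lemma F_cont:
  assumes "prime p" "n = p*q \<or> n = p*q+1"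
  shows "continuous_map (subtopology (unord_conf n (UNIV::complex set)) (topspace (unord_conf n (UNIV::complex set)) \<inter> {S. (\<lambda>z. zeta p * z) ` S = S}))
           (unord_conf q (-{0})) (Fm p)"
proof -
  let ?X = "ord_conf n (UNIV::complex set)"
  let ?\<pi> = "\<lambda>f::nat\<Rightarrow>complex. f ` {..<n}"
  let ?V = "topspace (unord_conf n (UNIV::complex set)) \<inter> {S. (\<lambda>z. zeta p * z) ` S = S}"
  define Pre where "Pre = {f \<in> topspace ?X. (\<lambda>z. zeta p * z) ` (f ` {..<n}) = f ` {..<n}}"
  have cl: "closedin (quotient_topology_of ?X ?\<pi>) ?V"
    using fix_closed[OF zeta_nz, of n p] unfolding unord_conf_def .
  have pre: "{f \<in> topspace ?X. ?\<pi> f \<in> ?V} = Pre"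
    unfolding Pre_def topspace_unord_conf by blast
  have "continuous_map (subtopology ?X Pre) (quotient_topology_of (ord_conf q (-{0})) (\<lambda>f. f ` {..<q})) (Fm p \<circ> ?\<pi>)"
  proof (rule cont_into_qt)
    fix f0 assume "f0 \<in> topspace (subtopology ?X Pre)"
    then have f0: "f0 \<in> topspace ?X" "(\<lambda>z. zeta p * z) ` (f0 ` {..<n}) = f0 ` {..<n}"
      unfolding Pre_def by auto
    obtain W h where Wh: "openin ?X W" "f0 \<in> W"
      "continuous_map (subtopology ?X (Pre \<inter> W)) (ord_conf q (-{0})) h"
      "\<forall>f\<in>Pre \<inter> W. h f ` {..<q} = Fm p (f ` {..<n})"
      using F_lift[OF assms f0] unfolding Pre_def by blast
    have "openin (subtopology ?X Pre) (W \<inter> Pre)" using Wh(1) by (rule openin_subtopology_Int)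
    moreover have "f0 \<in> W \<inter> Pre" using Wh(2) f0 unfolding Pre_def by blast
    moreover have "subtopology (subtopology ?X Pre) (W \<inter> Pre) = subtopology ?X (Pre \<inter> W)"
      by (simp add: subtopology_subtopology Int_commute Int_left_commute)
    ultimately show "\<exists>W h. openin (subtopology ?X Pre) W \<and> f0 \<in> W \<and>
        continuous_map (subtopology (subtopology ?X Pre) W) (ord_conf q (-{0})) h \<and>
        (\<forall>w\<in>W. h w ` {..<q} = (Fm p \<circ> ?\<pi>) w)"
      using Wh(3,4) by (intro exI[of _ "W \<inter> Pre"] exI[of _ h]) auto
  qed
  then have "continuous_map (subtopology ?X {f \<in> topspace ?X. ?\<pi> f \<in> ?V}) (quotient_topology_of (ord_conf q (-{0})) (\<lambda>f. f ` {..<q})) (Fm p \<circ> ?\<pi>)"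
    unfolding pre .
  then have "continuous_map (subtopology (quotient_topology_of ?X ?\<pi>) ?V) (quotient_topology_of (ord_conf q (-{0})) (\<lambda>f. f ` {..<q})) (Fm p)"
    by (rule cont_from_sub_qt[OF cl])
  then show ?thesis unfolding unord_conf_def .
qed

lemma G_lift:
  assumes "prime p" "n = p*q \<or> n = p*q+1" and g0: "g0 \<in> topspace (ord_conf q (-{0::complex}))"
  shows "\<exists>W h. openin (ord_conf q (-{0::complex})) W \<and> g0 \<in> W \<and>
     continuous_map (subtopology (ord_conf q (-{0})) W) (ord_conf n (UNIV::complex set)) h \<and>
     (\<forall>g\<in>W. h g ` {..<n} = Gm p q n (g ` {..<q}))"
proof -
  let ?Y = "ord_conf q (-{0::complex})"
  have p1: "1 \<le> p" using assms(1) prime_ge_1_nat by blast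
  have zp: "zeta p ^ p = 1" using p1 by (intro zeta_p) simp
  have g0nz: "g0 j \<noteq> 0" if "j < q" for j using g0 that unfolding topspace_ord_conf by auto
  define Oj where "Oj = (\<lambda>j. {w. 0 < Re (w / g0 j)})"
  have oO: "open (Oj j)" for j
  proof -
    have "continuous_on UNIV (\<lambda>w. Re (w / g0 j))" unfolding divide_inverse by (intro continuous_intros)
    then show ?thesis unfolding Oj_def by (rule open_Collect_less[OF continuous_on_const])
  qed
  define W where "W = {g \<in> topspace ?Y. \<forall>j\<in>{..<q}. g j \<in> Oj j}"
  have oj: "openin ?Y {g \<in> topspace ?Y. g j \<in> Oj j}" if "j < q" for j
  proof -
    have "openin euclidean (Oj j)" using oO[of j] by simp
    then show ?thesis using openin_continuous_map_preimage[OF proj_cont[OF that]] by blast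
  qed
  have oW: "openin ?Y W" unfolding W_def
    by (rule openin_all) (use oj in auto)
  have g0W: "g0 \<in> W" unfolding W_def Oj_def using g0 g0nz by auto
  define c where "c = (\<lambda>j w. exp (Ln (g0 j) / of_nat p) * exp (Ln (w / g0 j) / of_nat p))"
  have cprop: "c j w \<noteq> 0 \<and> c j w ^ p = w" if "j < q" "w \<in> Oj j" for j w
  proof -
    have "w / g0 j \<noteq> 0" using that unfolding Oj_def by auto
    then have "exp (Ln (w / g0 j) / of_nat p) ^ p = w / g0 j" using root_exists p1 by blast
    moreover have "exp (Ln (g0 j) / of_nat p) ^ p = g0 j" using root_exists p1 g0nz that(1) by blast
    ultimately have "c j w ^ p = g0 j * (w / g0 j)" unfolding c_def by (simp add: power_mult_distrib)
    then show ?thesis using g0nz[OF that(1)] unfolding c_def by simp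
  qed
  define v where "v = (\<lambda>g::nat\<Rightarrow>complex. \<lambda>k. if k < p * q then zeta p ^ (k mod p) * c (k div p) (g (k div p)) else 0)"
  define h where "h = (\<lambda>g. restrict (v g) {..<n})"
  have vprop: "k div p < q \<and> v g k \<noteq> 0 \<and> v g k ^ p = g (k div p)" if "g \<in> W" "k < p * q" for g k
  proof -
    have kq: "k div p < q" using that(2) less_mult_imp_div_less[of k q p] by (simp add: mult.commute)
    then have "g (k div p) \<in> Oj (k div p)" using that(1) unfolding W_def by auto
    then have cp: "c (k div p) (g (k div p)) \<noteq> 0" "c (k div p) (g (k div p)) ^ p = g (k div p)"
      using cprop kq by auto
    have "(zeta p ^ (k mod p)) ^ p = (zeta p ^ p) ^ (k mod p)" by (metis power_mult mult.commute)
    then have "v g k ^ p = c (k div p) (g (k div p)) ^ p" unfolding v_def using that(2) zp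
      by (simp add: power_mult_distrib)
    then show ?thesis using kq cp that(2) zeta_nz unfolding v_def by simp
  qed
  have cont: "continuous_map (subtopology ?Y W) (ord_conf n (UNIV::complex set)) h"
    unfolding ord_conf_def[of n] continuous_map_in_subtopology[of _ "product_topology _ _"]
  proof (intro conjI)
    show "continuous_map (subtopology ?Y W) (product_topology (\<lambda>i. subtopology euclidean UNIV) {..<n}) h"
      unfolding continuous_map_componentwise
    proof (intro conjI ballI)
      show "h ` topspace (subtopology ?Y W) \<subseteq> extensional {..<n}"
        unfolding h_def by auto
    next
      fix k assume k: "k \<in> {..<n}"
      show "continuous_map (subtopology ?Y W) (subtopology euclidean UNIV) (\<lambda>x. h x k)"
      proof (cases "k < p * q")
        case True
        have kq: "k div p < q" using True less_mult_imp_div_less[of k q p] by (simp add: mult.commute)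
        have e: "(\<lambda>x. h x k) = (\<lambda>x. zeta p ^ (k mod p) * c (k div p) (x (k div p)))"
          using k True unfolding h_def v_def by auto
        have co: "continuous_on (Oj (k div p)) (\<lambda>w. zeta p ^ (k mod p) * c (k div p) w)"
          unfolding c_def
          by (intro continuous_intros) (use kq g0nz p1 in \<open>auto simp: Oj_def complex_nonpos_Reals_iff\<close>)
        have "continuous_map (subtopology ?Y W) euclidean (\<lambda>x. zeta p ^ (k mod p) * c (k div p) (x (k div p)))"
          by (rule coord_cont[OF kq _ co]) (use kq in \<open>auto simp: W_def\<close>)
        then show ?thesis unfolding e by simp
      next
        case False
        have e: "(\<lambda>x. h x k) = (\<lambda>x. 0)"
          using k False unfolding h_def v_def by auto
        show ?thesis unfolding e by simp
      qed
    qed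
  next
    show "h \<in> topspace (subtopology ?Y W) \<rightarrow> {f. inj_on f {..<n}}"
    proof
      fix g assume g: "g \<in> topspace (subtopology ?Y W)"
      then have gW: "g \<in> W" by auto
      have ginj: "inj_on g {..<q}" using g by (simp add: topspace_ord_conf)
      have "inj_on (v g) {..<n}"
      proof (rule inj_onI)
        fix k1 k2 assume k1: "k1 \<in> {..<n}" and k2: "k2 \<in> {..<n}" and eq: "v g k1 = v g k2"
        show "k1 = k2"
        proof (cases "k1 < p * q")
          case T1: True
          show ?thesis
          proof (cases "k2 < p * q")
            case T2: True
            have "g (k1 div p) = g (k2 div p)" using vprop[OF gW T1] vprop[OF gW T2] eq by metis
            then have d: "k1 div p = k2 div p" using ginj vprop[OF gW T1] vprop[OF gW T2]
              unfolding inj_on_def by blast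
            have "k1 div p < q" using vprop[OF gW T1] by blast
            then have "g (k1 div p) \<in> Oj (k1 div p)" using gW unfolding W_def by auto
            then have cnz: "c (k1 div p) (g (k1 div p)) \<noteq> 0" using cprop \<open>k1 div p < q\<close> by blast
            have "zeta p ^ (k1 mod p) * c (k1 div p) (g (k1 div p)) = zeta p ^ (k2 mod p) * c (k1 div p) (g (k1 div p))"
              using eq T1 T2 d unfolding v_def by simp
            then have "zeta p ^ (k1 mod p) = zeta p ^ (k2 mod p)" using cnz by simp
            then have "k1 mod p = k2 mod p" using zeta_inj[OF p1] p1 by simp
            then show ?thesis using d by (metis div_mult_mod_eq)
          next
            case F2: False
            then show ?thesis using eq vprop[OF gW T1] unfolding v_def by simp
          qed
        next
          case F1: False
          show ?thesis
          proof (cases "k2 < p * q")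
            case T2: True
            then show ?thesis using eq vprop[OF gW T2] F1 unfolding v_def by simp
          next
            case F2: False
            then show ?thesis using F1 k1 k2 assms(2) by auto
          qed
        qed
      qed
      then show "h g \<in> {f. inj_on f {..<n}}" unfolding h_def by simp
    qed
  qed
  have img: "h g ` {..<n} = Gm p q n (g ` {..<q})" if gW: "g \<in> W" for g
  proof (intro equalityI subsetI)
    fix z assume "z \<in> h g ` {..<n}"
    then obtain k where k: "k < n" "z = v g k" unfolding h_def by auto
    show "z \<in> Gm p q n (g ` {..<q})"
    proof (cases "k < p * q")
      case True
      then show ?thesis using vprop[OF gW True] k unfolding Gm_def by auto
    next
      case False
      then have "n = p * q + 1" "z = 0" using k assms(2) unfolding v_def by auto
      then show ?thesis unfolding Gm_def by simp
    qed
  next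
    fix z assume z: "z \<in> Gm p q n (g ` {..<q})"
    show "z \<in> h g ` {..<n}"
    proof (cases "z ^ p \<in> g ` {..<q}")
      case True
      then obtain j where j: "j < q" "z ^ p = g j" by auto
      have "g j \<in> Oj j" using gW j unfolding W_def by auto
      then have cp: "c j (g j) \<noteq> 0" "c j (g j) ^ p = g j" using cprop j by auto
      obtain m where m: "m < p" "z = zeta p ^ m * c j (g j)"
        using root_rel[OF p1 cp(1), of z] j cp by auto
      define k where "k = j * p + m"
      have kdiv: "k div p = j" "k mod p = m" unfolding k_def using m p1 by auto
      have "k < p * q"
      proof -
        have "k < j * p + p" unfolding k_def using m by simp
        also have "\<dots> = (j + 1) * p" by simp
        also have "\<dots> \<le> q * p" using j by (intro mult_right_mono) auto
        finally show ?thesis by (simp add: mult.commute)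
      qed
      moreover then have "k < n" using assms(2) by auto
      ultimately have "v g k = z" unfolding v_def using kdiv m by simp
      then show ?thesis unfolding h_def using \<open>k < n\<close> by (auto intro!: image_eqI[of _ _ k])
    next
      case False
      then have "z = 0" "n = p * q + 1" using z unfolding Gm_def by (auto split: if_splits)
      then have "v g (p * q) = z" "p * q < n" unfolding v_def by auto
      then show ?thesis unfolding h_def by (auto intro!: image_eqI[of _ _ "p * q"])
    qed
  qed
  show ?thesis using oW g0W cont img by blast
qed

lemma G_cont:
  assumes "prime p" "n = p*q \<or> n = p*q+1"
  shows "continuous_map (unord_conf q (-{0::complex}))
    (subtopology (unord_conf n (UNIV::complex set)) (topspace (unord_conf n (UNIV::complex set)) \<inter> {S. (\<lambda>z. zeta p * z) ` S = S}))
    (Gm p q n)"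
proof -
  have p1: "1 \<le> p" using assms(1) prime_ge_1_nat by blast
  let ?V = "topspace (unord_conf n (UNIV::complex set)) \<inter> {S. (\<lambda>z. zeta p * z) ` S = S}"
  have c1: "continuous_map (ord_conf q (-{0::complex})) (unord_conf n (UNIV::complex set)) (Gm p q n \<circ> (\<lambda>f. f ` {..<q}))"
    unfolding unord_conf_def[of n]
  proof (rule cont_into_qt)
    fix g0 assume g0: "g0 \<in> topspace (ord_conf q (-{0::complex}))"
    obtain W h where A: "openin (ord_conf q (-{0::complex})) W \<and> g0 \<in> W \<and>
      continuous_map (subtopology (ord_conf q (-{0})) W) (ord_conf n (UNIV::complex set)) h \<and>
      (\<forall>g\<in>W. h g ` {..<n} = Gm p q n (g ` {..<q}))"
      using G_lift[OF assms g0] by (elim exE)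
    then show "\<exists>W h. openin (ord_conf q (-{0::complex})) W \<and> g0 \<in> W \<and>
        continuous_map (subtopology (ord_conf q (-{0})) W) (ord_conf n (UNIV::complex set)) h \<and>
        (\<forall>w\<in>W. h w ` {..<n} = (Gm p q n \<circ> (\<lambda>f. f ` {..<q})) w)"
      unfolding o_def by (intro exI[of _ W] exI[of _ h]) simp
  qed
  have c2: "continuous_map (ord_conf q (-{0::complex})) (subtopology (unord_conf n (UNIV::complex set)) ?V) (Gm p q n \<circ> (\<lambda>f. f ` {..<q}))"
    unfolding continuous_map_in_subtopology
  proof
    show "Gm p q n \<circ> (\<lambda>f. f ` {..<q}) \<in> topspace (ord_conf q (-{0::complex})) \<rightarrow> ?V"
    proof
      fix g assume g: "g \<in> topspace (ord_conf q (-{0::complex}))"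
      have "(Gm p q n \<circ> (\<lambda>f. f ` {..<q})) g \<in> topspace (unord_conf n (UNIV::complex set))"
        using continuous_map_funspace[OF c1] g by (rule funcset_mem)
      then show "(Gm p q n \<circ> (\<lambda>f. f ` {..<q})) g \<in> ?V" using G_inv[OF p1] by simp
    qed
  qed (rule c1)
  show ?thesis
    using c2 continuous_compose_quotient_map_eq[OF qt_quotient[of "ord_conf q (-{0::complex})" "\<lambda>f. f ` {..<q}"]]
    unfolding unord_conf_def[of q] by blast
qed

theorem mainTheorem11:
  fixes p q n :: nat
  assumes "prime p" and "n = p * q \<or> n = p * q + 1"
  shows "subtopology (unord_conf n (UNIV :: complex set))
           {S. (\<lambda>z. exp (2 * of_real pi * \<i> / of_nat p) * z) ` S = S}
         homeomorphic_space unord_conf q (- {0 :: complex})"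
proof -
  have p1: "1 \<le> p" using assms(1) prime_ge_1_nat by blast
  have zd: "(\<lambda>z. exp (2 * of_real pi * \<i> / of_nat p) * z) = (\<lambda>z. zeta p * z)"
    by (simp add: zeta_def)
  let ?V = "topspace (unord_conf n (UNIV::complex set)) \<inter> {S. (\<lambda>z. zeta p * z) ` S = S}"
  have sub: "subtopology (unord_conf n (UNIV :: complex set)) {S. (\<lambda>z. exp (2 * of_real pi * \<i> / of_nat p) * z) ` S = S}
     = subtopology (unord_conf n (UNIV :: complex set)) ?V"
    unfolding zd subtopology_restrict ..
  have "homeomorphic_maps (subtopology (unord_conf n (UNIV :: complex set)) ?V) (unord_conf q (- {0 :: complex})) (Fm p) (Gm p q n)"
    unfolding homeomorphic_maps_def
  proof (intro conjI ballI)
    show "continuous_map (subtopology (unord_conf n UNIV) ?V) (unord_conf q (- {0})) (Fm p)"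
      by (rule F_cont[OF assms])
    show "continuous_map (unord_conf q (- {0})) (subtopology (unord_conf n UNIV) ?V) (Gm p q n)"
      by (rule G_cont[OF assms])
  next
    fix S assume "S \<in> topspace (subtopology (unord_conf n (UNIV :: complex set)) ?V)"
    then have "finite S" "card S = n" "(\<lambda>z. zeta p * z) ` S = S"
      unfolding topspace_subtopology topspace_unord_conf_alt by auto
    then show "Gm p q n (Fm p S) = S" using GF[OF assms] by blast
  next
    fix T assume "T \<in> topspace (unord_conf q (- {0 :: complex}))"
    then have "0 \<notin> T" unfolding topspace_unord_conf_alt by auto
    then show "Fm p (Gm p q n T) = T" using FG[OF p1] by blast
  qed
  then show ?thesis unfolding sub by (rule homeomorphic_maps_imp_homeomorphic_space)
qed

end
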